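(* Let $d\ge 1$, $T\ge 1$, let $\mathcal{X}\subseteq\mathbb{R}^d$ be a non-empty closed convex set containing $\mathbf{0}$, and let $0<\mu\le L$. Let $f_1,\dots,f_T:\mathcal{X}\to[0,\infty)$ be differentiable functions such that, for every $t$ and all $x,y\in\mathcal{X}$, $$\frac{\mu}{2}\|y-x\|^2\le f_t(y)-f_t(x)-\langle\nabla f_t(x),y-x\rangle\le\frac{L}{2}\|y-x\|^2 .$$ Assume that each minimizer $x_t^\star=\arg\min_{x\in\mathcal{X}}f_t(x)$ lies in the interior of $\mathcal{X}$. Let the starting point be $x_0=\mathbf{0}$, let $C_{\mathcal{A}_o}$ be the quadratic-switching cost of the OMGD algorithm with $K=\lceil\frac{L+\mu}{2\mu}\ln 4\rceil$, and let $C_{\mathsf{OPT}}$ be the optimal offline quadratic-switching cost. Then $$\frac{C_{\mathcal{A}_o}}{C_{\mathsf{OPT}}}\le 4(L+5)+\frac{16(L+5)}{\mu}.$$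
   Context: $\|\cdot\|$ is the Euclidean norm and $\Pi_{\mathcal{X}}(y)=\arg\min_{z\in\mathcal{X}}\|z-y\|$ is the Euclidean projection. For a sequence $(y_1,\dots,y_T)\in\mathcal{X}^T$ with $y_0=x_0$, its quadratic-switching cost is $\sum_{t=1}^T\big(f_t(y_t)+\frac12\|y_t-y_{t-1}\|^2\big)$. $C_{\mathsf{OPT}}$ is the minimum of this cost over all $(y_1,\dots,y_T)\in\mathcal{X}^T$ (with $y_0=x_0$). The OMGD (online multiple gradient descent) algorithm with parameter $K$ produces $x_1=x_0$ and, for $t=2,\dots,T$: set $z_t^{(0)}=x_{t-1}$, for $k=1,\dots,K$ set $z_t^{(k)}=\Pi_{\mathcal{X}}\big(z_t^{(k-1)}-\frac1L\nabla f_{t-1}(z_t^{(k-1)})\big)$, and set $x_t=z_t^{(K)}$. $C_{\mathcal{A}_o}$ is the quadratic-switching cost of $(x_1,\dots,x_T)$. *)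

theory Defs
  imports "HOL-Analysis.Analysis"
begin

definition pgd_step :: "'a::euclidean_space set \<Rightarrow> real \<Rightarrow> (nat \<Rightarrow> 'a \<Rightarrow> 'a) \<Rightarrow> nat \<Rightarrow> 'a \<Rightarrow> 'a" where
  "pgd_step X L g t z = closest_point X (z - (1 / L) *\<^sub>R g t z)"

fun omgd :: "'a::euclidean_space set \<Rightarrow> real \<Rightarrow> (nat \<Rightarrow> 'a \<Rightarrow> 'a) \<Rightarrow> nat \<Rightarrow> 'a \<Rightarrow> nat \<Rightarrow> 'a" where
  "omgd X L g K x0 0 = x0"
| "omgd X L g K x0 (Suc 0) = x0"
| "omgd X L g K x0 (Suc (Suc n)) = (pgd_step X L g (Suc n) ^^ K) (omgd X L g K x0 (Suc n))"

definition sw_cost :: "(nat \<Rightarrow> 'a::euclidean_space \<Rightarrow> real) \<Rightarrow> nat \<Rightarrow> (nat \<Rightarrow> 'a) \<Rightarrow> real" where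
  "sw_cost f T y = (\<Sum>t\<in>{1..T}. f t (y t) + (1/2) * (norm (y t - y (t - 1)))\<^sup>2)"

definition opt_cost :: "'a::euclidean_space set \<Rightarrow> (nat \<Rightarrow> 'a \<Rightarrow> real) \<Rightarrow> nat \<Rightarrow> 'a \<Rightarrow> real" where
  "opt_cost X f T x0 = Inf {sw_cost f T y | y. y 0 = x0 \<and> (\<forall>t\<in>{1..T}. y t \<in> X)}"

end

theory Submission
  imports Defs
begin


lemma step_contract:
  fixes F :: "'a::euclidean_space \<Rightarrow> real" and G :: "'a \<Rightarrow> 'a"
  assumes X: "convex X" "closed X" and x: "x \<in> X" and z: "z \<in> X" and Gz: "G z = 0"
    and muL: "0 < \<mu>" "\<mu> \<le> L"
    and sc: "\<And>x y. x \<in> X \<Longrightarrow> y \<in> X \<Longrightarrow> \<mu> / 2 * (norm (y - x))\<^sup>2 \<le> F y - F x - G x \<bullet> (y - x)"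
    and sm: "\<And>x y. x \<in> X \<Longrightarrow> y \<in> X \<Longrightarrow> F y - F x - G x \<bullet> (y - x) \<le> L / 2 * (norm (y - x))\<^sup>2"
  shows "(norm (closest_point X (x - (1/L) *\<^sub>R G x) - z))\<^sup>2 \<le> (L - \<mu>) / (L + \<mu>) * (norm (x - z))\<^sup>2"
proof -
  define p where "p = closest_point X (x - (1/L) *\<^sub>R G x)"
  have p: "p \<in> X" unfolding p_def using X x closest_point_in_set by blast
  define u where "u = x - z"
  define v where "v = p - z"
  have A: "F p - F x - G x \<bullet> (v - u) \<le> L / 2 * (v \<bullet> v - 2 * (u \<bullet> v) + u \<bullet> u)"
  proof -
    have "p - x = v - u" by (simp add: u_def v_def)
    moreover have "(norm (v - u))\<^sup>2 = v \<bullet> v - 2 * (u \<bullet> v) + u \<bullet> u"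
      by (simp add: power2_norm_eq_inner inner_diff_left inner_diff_right inner_commute)
    ultimately show ?thesis using sm[OF x p] by simp
  qed
  have B: "\<mu> / 2 * (u \<bullet> u) \<le> F z - F x + G x \<bullet> u"
  proof -
    have "z - x = - u" by (simp add: u_def)
    then show ?thesis using sc[OF x z] by (simp add: power2_norm_eq_inner)
  qed
  have C: "\<mu> / 2 * (v \<bullet> v) \<le> F p - F z"
    using sc[OF z p] Gz by (simp add: v_def power2_norm_eq_inner)
  have D0: "(x - (1/L) *\<^sub>R G x - p) \<bullet> (z - p) \<le> 0"
    unfolding p_def by (rule closest_point_dot[OF X z])
  have e1: "x - (1/L) *\<^sub>R G x - p = (u - v) - (1/L) *\<^sub>R G x" by (simp add: u_def v_def)
  have e2: "z - p = - v" by (simp add: v_def)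
  have "((u - v) - (1/L) *\<^sub>R G x) \<bullet> (- v) \<le> 0" using D0 unfolding e1 e2 .
  hence "- (u \<bullet> v) + v \<bullet> v + (1/L) * (G x \<bullet> v) \<le> 0"
    by (simp add: inner_diff_left inner_diff_right inner_commute)
  hence D: "L * (v \<bullet> v) - L * (u \<bullet> v) + G x \<bullet> v \<le> 0"
    using muL by (simp add: field_simps)
  have "G x \<bullet> (v - u) = G x \<bullet> v - G x \<bullet> u" by (simp add: inner_diff_right)
  hence "(L + \<mu>) * (v \<bullet> v) \<le> (L - \<mu>) * (u \<bullet> u)" using A B C D by (simp add: algebra_simps)
  moreover have "L + \<mu> > 0" using muL by simp
  ultimately have "v \<bullet> v \<le> (L - \<mu>) / (L + \<mu>) * (u \<bullet> u)"
    by (simp add: field_simps)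
  thus ?thesis by (simp add: p_def[symmetric] u_def v_def power2_norm_eq_inner)
qed



lemma exists_min:
  fixes F :: "'a::euclidean_space \<Rightarrow> real" and G :: "'a \<Rightarrow> 'a"
  assumes X: "closed X" and a: "a \<in> X" and cont: "continuous_on X F" and mu: "0 < \<mu>"
    and sc: "\<And>x y. x \<in> X \<Longrightarrow> y \<in> X \<Longrightarrow> \<mu> / 2 * (norm (y - x))\<^sup>2 \<le> F y - F x - G x \<bullet> (y - x)"
  shows "\<exists>z\<in>X. \<forall>y\<in>X. F z \<le> F y"
proof -
  define R where "R = 2 * norm (G a) / \<mu>"
  have "compact (X \<inter> cball a R)" using X by (simp add: compact_Int_closed closed_Int_compact)
  moreover have "X \<inter> cball a R \<noteq> {}" using a mu by (auto simp: R_def)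
  moreover have "continuous_on (X \<inter> cball a R) F" using cont by (rule continuous_on_subset) auto
  ultimately obtain z where z: "z \<in> X \<inter> cball a R" and zmin: "\<forall>y\<in>X \<inter> cball a R. F z \<le> F y"
    using continuous_attains_inf by blast
  have "F z \<le> F y" if y: "y \<in> X" for y
  proof (cases "y \<in> cball a R")
    case True then show ?thesis using zmin y by auto
  next
    case False
    hence r: "norm (y - a) > R" by (simp add: dist_norm norm_minus_commute)
    have "\<mu> / 2 * (norm (y - a))\<^sup>2 \<le> F y - F a - G a \<bullet> (y - a)" using sc[OF a y] .
    moreover have "- (G a \<bullet> (y - a)) \<le> norm (G a) * norm (y - a)"
      using norm_cauchy_schwarz[of "- G a" "y - a"] by simp
    moreover have "norm (G a) * norm (y - a) \<le> \<mu> / 2 * (norm (y - a))\<^sup>2"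
    proof -
      have "norm (G a) \<le> \<mu> / 2 * norm (y - a)" using r mu by (simp add: R_def field_simps)
      hence "norm (G a) * norm (y - a) \<le> (\<mu> / 2 * norm (y - a)) * norm (y - a)"
        by (rule mult_right_mono) simp
      thus ?thesis by (simp add: power2_eq_square)
    qed
    ultimately have "F a \<le> F y" by linarith
    moreover have "F z \<le> F a" using zmin a mu by (auto simp: R_def)
    ultimately show ?thesis by linarith
  qed
  thus ?thesis using z by blast
qed

lemma grad_zero:
  fixes F :: "'a::euclidean_space \<Rightarrow> real" and G :: "'a \<Rightarrow> 'a"
  assumes d: "(F has_derivative (\<lambda>h. G z \<bullet> h)) (at z within X)"
    and zi: "z \<in> interior X" and zmin: "\<forall>y\<in>X. F z \<le> F y"
  shows "G z = 0"
proof -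
  have d': "(F has_derivative (\<lambda>h. G z \<bullet> h)) (at z)" using d at_within_interior[OF zi] by simp
  have "eventually (\<lambda>y. y \<in> X) (at z within X)" by (simp add: eventually_at_filter)
  hence "eventually (\<lambda>y. F z \<le> F y) (at z)" using at_within_interior[OF zi] zmin
    by (auto elim: eventually_mono)
  from has_derivative_local_min[OF d' this] have "(\<lambda>h. G z \<bullet> h) = (\<lambda>h. 0)" .
  hence "G z \<bullet> G z = 0" by metis
  thus ?thesis by simp
qed

lemma rho_pow:
  fixes \<mu> L :: real
  assumes "0 < \<mu>" "\<mu> \<le> L"
  shows "((L - \<mu>) / (L + \<mu>)) ^ (nat \<lceil>(L + \<mu>) / (2 * \<mu>) * ln 4\<rceil>) \<le> 1/4"
proof -
  define K where "K = nat \<lceil>(L + \<mu>) / (2 * \<mu>) * ln 4\<rceil>"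
  define c where "c = 2 * \<mu> / (L + \<mu>)"
  have c: "c > 0" using assms by (simp add: c_def)
  have rho: "(L - \<mu>) / (L + \<mu>) = 1 - c" using assms by (simp add: c_def field_simps)
  have r0: "0 \<le> 1 - c" using assms by (simp add: rho[symmetric])
  have "(1 - c) ^ K \<le> exp (- c) ^ K"
    by (rule power_mono) (use r0 exp_ge_add_one_self[of "-c"] in auto)
  also have "\<dots> = exp (- c * K)" by (simp add: exp_of_nat_mult[symmetric] mult.commute)
  also have "\<dots> \<le> exp (- ln 4)"
  proof -
    have "(L + \<mu>) / (2 * \<mu>) * ln 4 \<le> K" unfolding K_def by linarith
    hence "ln 4 \<le> c * K" using assms by (simp add: c_def field_simps)
    thus ?thesis by simp
  qed
  also have "\<dots> = 1/4" by (simp add: exp_minus)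
  finally show ?thesis by (simp add: rho K_def)
qed

lemma three_sq:
  fixes p q r \<mu> :: real
  assumes "0 < \<mu>"
  shows "(p + q + r)\<^sup>2 \<le> (2 + 8 / \<mu>) * (\<mu> / 4 * p\<^sup>2 + 1/2 * q\<^sup>2 + \<mu> / 4 * r\<^sup>2)"
proof -
  have "(2 + 8 / \<mu>) * (\<mu> / 4 * p\<^sup>2 + 1/2 * q\<^sup>2 + \<mu> / 4 * r\<^sup>2) - (p + q + r)\<^sup>2
     = (\<mu> * p - 2 * q)\<^sup>2 / (2 * \<mu>) + (\<mu> * r - 2 * q)\<^sup>2 / (2 * \<mu>) + (p - r)\<^sup>2"
    using assms by (simp add: field_simps power2_eq_square)
  moreover have "(\<mu> * p - 2 * q)\<^sup>2 / (2 * \<mu>) \<ge> 0" "(\<mu> * r - 2 * q)\<^sup>2 / (2 * \<mu>) \<ge> 0" using assms by auto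
  ultimately show ?thesis by (smt (verit) zero_le_power2)
qed



lemma iter_in: "closed X \<Longrightarrow> X \<noteq> {} \<Longrightarrow> z \<in> X \<Longrightarrow> (pgd_step X L g t ^^ k) z \<in> X"
  by (induction k) (auto simp: pgd_step_def closest_point_in_set)

lemma omgd_in: "closed X \<Longrightarrow> X \<noteq> {} \<Longrightarrow> x0 \<in> X \<Longrightarrow> omgd X L g K x0 t \<in> X"
  by (induction X L g K x0 t rule: omgd.induct) (auto intro: iter_in)

lemma iter_contract:
  fixes F :: "'a::euclidean_space \<Rightarrow> real" and g :: "nat \<Rightarrow> 'a \<Rightarrow> 'a"
  assumes X: "convex X" "closed X" "X \<noteq> {}" and x: "x \<in> X" and z: "z \<in> X" and Gz: "g t z = 0"
    and muL: "0 < \<mu>" "\<mu> \<le> L"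
    and sc: "\<And>x y. x \<in> X \<Longrightarrow> y \<in> X \<Longrightarrow> \<mu> / 2 * (norm (y - x))\<^sup>2 \<le> F y - F x - g t x \<bullet> (y - x)"
    and sm: "\<And>x y. x \<in> X \<Longrightarrow> y \<in> X \<Longrightarrow> F y - F x - g t x \<bullet> (y - x) \<le> L / 2 * (norm (y - x))\<^sup>2"
  shows "(norm ((pgd_step X L g t ^^ k) x - z))\<^sup>2 \<le> ((L - \<mu>) / (L + \<mu>)) ^ k * (norm (x - z))\<^sup>2"
proof (induction k)
  case 0 then show ?case by simp
next
  case (Suc k)
  let ?w = "(pgd_step X L g t ^^ k) x"
  have w: "?w \<in> X" using iter_in X x by blast
  have r0: "0 \<le> (L - \<mu>) / (L + \<mu>)" using muL by simp
  have "(norm ((pgd_step X L g t ^^ Suc k) x - z))\<^sup>2 = (norm (closest_point X (?w - (1/L) *\<^sub>R g t ?w) - z))\<^sup>2"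
    by (simp add: pgd_step_def)
  also have "\<dots> \<le> (L - \<mu>) / (L + \<mu>) * (norm (?w - z))\<^sup>2"
    by (rule step_contract[OF X(1,2) w z Gz muL sc sm])
  also have "\<dots> \<le> (L - \<mu>) / (L + \<mu>) * (((L - \<mu>) / (L + \<mu>)) ^ k * (norm (x - z))\<^sup>2)"
    by (rule mult_left_mono[OF Suc.IH r0])
  finally show ?case by simp
qed

lemma sq2: "(norm (a + b))\<^sup>2 \<le> 2 * (norm a)\<^sup>2 + 2 * (norm (b::'a::real_normed_vector))\<^sup>2"
proof -
  have "norm (a + b) \<le> norm a + norm b" by (rule norm_triangle_ineq)
  hence "(norm (a + b))\<^sup>2 \<le> (norm a + norm b)\<^sup>2" by (simp add: power_mono)
  also have "\<dots> \<le> 2 * (norm a)\<^sup>2 + 2 * (norm b)\<^sup>2"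
  proof -
    have "(norm a + norm b)\<^sup>2 + (norm a - norm b)\<^sup>2 = 2 * (norm a)\<^sup>2 + 2 * (norm b)\<^sup>2"
      by (simp add: power2_eq_square algebra_simps)
    moreover have "(norm a - norm b)\<^sup>2 \<ge> 0" by simp
    ultimately show ?thesis by linarith
  qed
  finally show ?thesis .
qed

lemma shift_sum: fixes n :: nat shows "(\<Sum>t\<in>{1..n}. h (t - 1)) + h n = (\<Sum>t\<in>{1..n}. h t) + (h 0 :: real)"
  by (induction n rule: nat.induct) auto



theorem theorem1:
  fixes X :: "'a::euclidean_space set"
    and f :: "nat \<Rightarrow> 'a \<Rightarrow> real"
    and g :: "nat \<Rightarrow> 'a \<Rightarrow> 'a"
    and T :: nat and \<mu> L :: real
  assumes T: "T \<ge> 1"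
    and X: "X \<noteq> {}" "closed X" "convex X" "0 \<in> X"
    and muL: "0 < \<mu>" "\<mu> \<le> L"
    and nonneg: "\<And>t x. t \<in> {1..T} \<Longrightarrow> x \<in> X \<Longrightarrow> f t x \<ge> 0"
    and grad: "\<And>t x. t \<in> {1..T} \<Longrightarrow> x \<in> X \<Longrightarrow>
                 (f t has_derivative (\<lambda>h. g t x \<bullet> h)) (at x within X)"
    and sc: "\<And>t x y. t \<in> {1..T} \<Longrightarrow> x \<in> X \<Longrightarrow> y \<in> X \<Longrightarrow>
                 \<mu> / 2 * (norm (y - x))\<^sup>2 \<le> f t y - f t x - g t x \<bullet> (y - x)"
    and sm: "\<And>t x y. t \<in> {1..T} \<Longrightarrow> x \<in> X \<Longrightarrow> y \<in> X \<Longrightarrow>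
                 f t y - f t x - g t x \<bullet> (y - x) \<le> L / 2 * (norm (y - x))\<^sup>2"
    and interior_min: "\<And>t x. t \<in> {1..T} \<Longrightarrow> x \<in> X \<Longrightarrow> (\<forall>y\<in>X. f t x \<le> f t y) \<Longrightarrow> x \<in> interior X"
  shows "sw_cost f T (omgd X L g (nat \<lceil>(L + \<mu>) / (2 * \<mu>) * ln 4\<rceil>) 0)
           / opt_cost X f T 0
         \<le> 4 * (L + 5) + 16 * (L + 5) / \<mu>"
proof -
  define K where "K = nat \<lceil>(L + \<mu>) / (2 * \<mu>) * ln 4\<rceil>"
  define x where "x = omgd X L g K 0"
  define R where "R = 4 * (L + 5) + 16 * (L + 5) / \<mu>"
  have Rdef: "R = (2 * L + 10) * (2 + 8 / \<mu>)" using muL by (simp add: R_def field_simps)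
  have xX: "x t \<in> X" for t unfolding x_def using omgd_in X by blast
  have x0: "x 0 = 0" and x1: "x 1 = 0" "x (Suc 0) = 0" by (simp_all add: x_def)
  have xS: "x (Suc (Suc n)) = (pgd_step X L g (Suc n) ^^ K) (x (Suc n))" for n
    by (simp add: x_def)
  have exmin: "\<exists>z. z \<in> X \<and> (\<forall>y\<in>X. f t z \<le> f t y)" if t: "t \<in> {1..T}" for t
  proof -
    have "continuous_on X (f t)"
      using grad[OF t] has_derivative_continuous continuous_on_eq_continuous_within by blast
    thus ?thesis using exists_min[OF X(2) X(4) _ muL(1) sc[OF t]] by blast
  qed
  define xs where "xs t = (if t = 0 then 0 else SOME z. z \<in> X \<and> (\<forall>y\<in>X. f t z \<le> f t y))" for t
  have xs0: "xs 0 = 0" by (simp add: xs_def)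
  have xsX: "xs t \<in> X" and xsmin: "\<forall>y\<in>X. f t (xs t) \<le> f t y" if t: "t \<in> {1..T}" for t
  proof -
    have "t \<noteq> 0" using t by simp
    hence "xs t = (SOME z. z \<in> X \<and> (\<forall>y\<in>X. f t z \<le> f t y))" by (simp add: xs_def)
    then show "xs t \<in> X" "\<forall>y\<in>X. f t (xs t) \<le> f t y" using someI_ex[OF exmin[OF t]] by auto
  qed
  have g0: "g t (xs t) = 0" if t: "t \<in> {1..T}" for t
    using grad_zero[where G="g t", OF grad[OF t xsX[OF t]] interior_min[OF t xsX[OF t] xsmin[OF t]] xsmin[OF t]] .
  have upper: "f t y \<le> f t (xs t) + L / 2 * (norm (y - xs t))\<^sup>2" if t: "t \<in> {1..T}" and y: "y \<in> X" for t y
    using sm[OF t xsX[OF t] y] g0[OF t] by simp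
  have lower: "f t (xs t) + \<mu> / 2 * (norm (y - xs t))\<^sup>2 \<le> f t y" if t: "t \<in> {1..T}" and y: "y \<in> X" for t y
    using sc[OF t xsX[OF t] y] g0[OF t] by simp
  define e where "e t = (norm (x t - xs t))\<^sup>2" for t
  define d where "d t = (norm (xs t - xs (t - 1)))\<^sup>2" for t
  have e0: "e 0 = 0" by (simp add: e_def x0 xs0)
  have e_nn: "e t \<ge> 0" for t by (simp add: e_def)
  have contr: "(norm (x t - xs (t - 1)))\<^sup>2 \<le> 1/4 * e (t - 1)" if t: "t \<in> {2..T}" for t
  proof -
    obtain n where n: "t = Suc (Suc n)" using t by (metis atLeastAtMost_iff add_2_eq_Suc le_Suc_ex)
    have t1: "Suc n \<in> {1..T}" using t n by auto
    have "(norm (x t - xs (t - 1)))\<^sup>2 \<le> ((L - \<mu>) / (L + \<mu>)) ^ K * (norm (x (Suc n) - xs (Suc n)))\<^sup>2"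
      unfolding n xS using iter_contract[where g=g and t="Suc n", OF X(3,2,1) xX[of "Suc n"] xsX[OF t1] g0[OF t1] muL sc[OF t1] sm[OF t1]]
      by simp
    also have "\<dots> \<le> 1/4 * e (t - 1)"
      using rho_pow[OF muL] mult_right_mono[of _ "1/4" "e (t - 1)"] e_nn
      unfolding K_def e_def n by simp
    finally show ?thesis .
  qed
  have erec: "e t \<le> 1/2 * e (t - 1) + 2 * d t" if t: "t \<in> {1..T}" for t
  proof (cases "t = 1")
    case True
    have "e 1 = d 1" by (simp add: e_def d_def x1 xs0 norm_minus_commute)
    then show ?thesis using True e0 by (simp add: d_def)
  next
    case False
    hence t2: "t \<in> {2..T}" using t by auto
    have "e t = (norm ((x t - xs (t - 1)) + (xs (t - 1) - xs t)))\<^sup>2" by (simp add: e_def)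
    also have "\<dots> \<le> 2 * (norm (x t - xs (t - 1)))\<^sup>2 + 2 * (norm (xs (t - 1) - xs t))\<^sup>2" by (rule sq2)
    also have "\<dots> \<le> 1/2 * e (t - 1) + 2 * d t"
      using contr[OF t2] by (simp add: d_def norm_minus_commute)
    finally show ?thesis .
  qed
  have swb: "(norm (x t - x (t - 1)))\<^sup>2 \<le> 5/2 * e (t - 1)" if t: "t \<in> {1..T}" for t
  proof (cases "t = 1")
    case True
    then show ?thesis using e_nn by (simp add: x0 x1)
  next
    case False
    hence t2: "t \<in> {2..T}" using t by auto
    have "(norm (x t - x (t - 1)))\<^sup>2 = (norm ((x t - xs (t - 1)) + (xs (t - 1) - x (t - 1))))\<^sup>2" by simp
    also have "\<dots> \<le> 2 * (norm (x t - xs (t - 1)))\<^sup>2 + 2 * (norm (xs (t - 1) - x (t - 1)))\<^sup>2" by (rule sq2)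
    also have "\<dots> \<le> 5/2 * e (t - 1)"
      using contr[OF t2] by (simp add: e_def norm_minus_commute)
    finally show ?thesis .
  qed
  define Se where "Se = (\<Sum>t\<in>{1..T}. e t)"
  define Sd where "Sd = (\<Sum>t\<in>{1..T}. d t)"
  define Sf where "Sf = (\<Sum>t\<in>{1..T}. f t (xs t))"
  have shift_e: "(\<Sum>t\<in>{1..T}. e (t - 1)) \<le> Se"
    using shift_sum[of e T] e0 e_nn[of T] by (simp add: Se_def)
  have "Se \<le> (\<Sum>t\<in>{1..T}. 1/2 * e (t - 1) + 2 * d t)"
    unfolding Se_def by (rule sum_mono) (rule erec)
  also have "\<dots> = 1/2 * (\<Sum>t\<in>{1..T}. e (t - 1)) + 2 * Sd"
    by (simp add: sum.distrib sum_distrib_left Sd_def)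
  finally have SeSd: "Se \<le> 4 * Sd" using shift_e by linarith
  have Sf_nn: "Sf \<ge> 0" unfolding Sf_def by (rule sum_nonneg) (use nonneg xsX in blast)
  have alg: "sw_cost f T x \<le> Sf + (2 * L + 5) * Sd"
  proof -
    have "sw_cost f T x \<le> (\<Sum>t\<in>{1..T}. f t (xs t) + L / 2 * e t + 5/4 * e (t - 1))"
      unfolding sw_cost_def
    proof (rule sum_mono)
      fix t assume t: "t \<in> {1..T}"
      show "f t (x t) + 1 / 2 * (norm (x t - x (t - 1)))\<^sup>2 \<le> f t (xs t) + L / 2 * e t + 5/4 * e (t - 1)"
        using upper[OF t xX[of t]] swb[OF t] by (simp add: e_def)
    qed
    also have "\<dots> = Sf + L / 2 * Se + 5/4 * (\<Sum>t\<in>{1..T}. e (t - 1))"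
      by (simp add: sum.distrib sum_distrib_left Sf_def Se_def)
    also have "\<dots> \<le> Sf + (L / 2 + 5/4) * Se"
      using shift_e by (simp add: algebra_simps)
    also have "\<dots> \<le> Sf + (2 * L + 5) * Sd"
    proof -
      have "(L / 2 + 5/4) * Se \<le> (L / 2 + 5/4) * (4 * Sd)"
        using SeSd muL by (intro mult_left_mono) auto
      thus ?thesis by (simp add: algebra_simps)
    qed
    finally show ?thesis .
  qed
  have optb: "sw_cost f T x \<le> R * sw_cost f T y" if y0: "y 0 = 0" and yX: "\<forall>t\<in>{1..T}. y t \<in> X" for y
  proof -
    define a where "a t = (norm (y t - xs t))\<^sup>2" for t
    define s where "s t = (norm (y t - y (t - 1)))\<^sup>2" for t
    have a0: "a 0 = 0" by (simp add: a_def y0 xs0)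
    have a_nn: "a t \<ge> 0" for t by (simp add: a_def)
    have dt: "d t \<le> (2 + 8 / \<mu>) * (\<mu> / 4 * a t + 1/2 * s t + \<mu> / 4 * a (t - 1))" for t
    proof -
      have eq: "xs t - xs (t - 1) = (xs t - y t) + (y t - y (t - 1)) + (y (t - 1) - xs (t - 1))" by simp
      have "norm ((xs t - y t) + (y t - y (t - 1)) + (y (t - 1) - xs (t - 1)))
          \<le> norm (xs t - y t) + norm (y t - y (t - 1)) + norm (y (t - 1) - xs (t - 1))"
        by (rule order_trans[OF norm_triangle_ineq add_right_mono[OF norm_triangle_ineq]])
      hence "norm (xs t - xs (t - 1)) \<le> norm (y t - xs t) + norm (y t - y (t - 1)) + norm (y (t - 1) - xs (t - 1))"
        unfolding eq[symmetric] by (simp add: norm_minus_commute)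
      hence "d t \<le> (norm (y t - xs t) + norm (y t - y (t - 1)) + norm (y (t - 1) - xs (t - 1)))\<^sup>2"
        unfolding d_def by (simp add: power_mono)
      also have "\<dots> \<le> (2 + 8 / \<mu>) * (\<mu> / 4 * a t + 1/2 * s t + \<mu> / 4 * a (t - 1))"
        using three_sq[OF muL(1)] by (simp add: a_def s_def)
      finally show ?thesis .
    qed
    have shift_a: "(\<Sum>t\<in>{1..T}. a (t - 1)) \<le> (\<Sum>t\<in>{1..T}. a t)"
      using shift_sum[of a T] a0 a_nn[of T] by simp
    have "Sd \<le> (\<Sum>t\<in>{1..T}. (2 + 8 / \<mu>) * (\<mu> / 4 * a t + 1/2 * s t + \<mu> / 4 * a (t - 1)))"
      unfolding Sd_def by (rule sum_mono) (rule dt)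
    also have "\<dots> = (2 + 8 / \<mu>) * (\<Sum>t\<in>{1..T}. \<mu> / 4 * a t + 1/2 * s t + \<mu> / 4 * a (t - 1))"
      by (simp add: sum_distrib_left)
    also have "\<dots> = (2 + 8 / \<mu>) * (\<mu> / 4 * (\<Sum>t\<in>{1..T}. a t) + 1/2 * (\<Sum>t\<in>{1..T}. s t) + \<mu> / 4 * (\<Sum>t\<in>{1..T}. a (t - 1)))"
      by (simp only: sum.distrib sum_distrib_left)
    also have "\<dots> \<le> (2 + 8 / \<mu>) * (\<mu> / 2 * (\<Sum>t\<in>{1..T}. a t) + 1/2 * (\<Sum>t\<in>{1..T}. s t))"
    proof (intro mult_left_mono)
      have "\<mu> / 4 * (\<Sum>t\<in>{1..T}. a (t - 1)) \<le> \<mu> / 4 * (\<Sum>t\<in>{1..T}. a t)"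
        using shift_a muL by (intro mult_left_mono) auto
      thus "\<mu> / 4 * (\<Sum>t\<in>{1..T}. a t) + 1/2 * (\<Sum>t\<in>{1..T}. s t) + \<mu> / 4 * (\<Sum>t\<in>{1..T}. a (t - 1))
          \<le> \<mu> / 2 * (\<Sum>t\<in>{1..T}. a t) + 1/2 * (\<Sum>t\<in>{1..T}. s t)" by linarith
    qed (use muL in simp)
    finally have Sd_b: "Sd \<le> (2 + 8 / \<mu>) * (\<mu> / 2 * (\<Sum>t\<in>{1..T}. a t) + 1/2 * (\<Sum>t\<in>{1..T}. s t))" .
    have "Sf + \<mu> / 2 * (\<Sum>t\<in>{1..T}. a t) + 1/2 * (\<Sum>t\<in>{1..T}. s t)
        = (\<Sum>t\<in>{1..T}. f t (xs t) + \<mu> / 2 * a t + 1/2 * s t)"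
      by (simp add: sum.distrib sum_distrib_left Sf_def)
    also have "\<dots> \<le> sw_cost f T y"
      unfolding sw_cost_def
    proof (rule sum_mono)
      fix t assume t: "t \<in> {1..T}"
      show "f t (xs t) + \<mu> / 2 * a t + 1/2 * s t \<le> f t (y t) + 1 / 2 * (norm (y t - y (t - 1)))\<^sup>2"
        using lower[OF t] yX t by (simp add: a_def s_def)
    qed
    finally have cy: "Sf + \<mu> / 2 * (\<Sum>t\<in>{1..T}. a t) + 1/2 * (\<Sum>t\<in>{1..T}. s t) \<le> sw_cost f T y" .
    define D where "D = sw_cost f T y - Sf"
    have "8 / \<mu> > 0" using muL by simp
    hence c8: "2 + 8 / \<mu> > 0" by linarith
    have sa: "0 \<le> (\<Sum>t\<in>{1..T}. a t)" by (rule sum_nonneg) (simp add: a_nn)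
    have ss: "0 \<le> (\<Sum>t\<in>{1..T}. s t)" by (rule sum_nonneg) (simp add: s_def)
    have "0 \<le> \<mu> / 2 * (\<Sum>t\<in>{1..T}. a t)" using sa muL by simp
    hence D_nn: "D \<ge> 0" using cy ss unfolding D_def by linarith
    have "\<mu> / 2 * (\<Sum>t\<in>{1..T}. a t) + 1/2 * (\<Sum>t\<in>{1..T}. s t) \<le> D"
      using cy unfolding D_def by linarith
    hence "(2 + 8 / \<mu>) * (\<mu> / 2 * (\<Sum>t\<in>{1..T}. a t) + 1/2 * (\<Sum>t\<in>{1..T}. s t)) \<le> (2 + 8 / \<mu>) * D"
      using c8 by (intro mult_left_mono) auto
    hence SdD: "Sd \<le> (2 + 8 / \<mu>) * D" using Sd_b by linarith
    have c1: "(2 * L + 5) * Sd \<le> (2 * L + 5) * ((2 + 8 / \<mu>) * D)"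
      using SdD muL by (intro mult_left_mono) auto
    have c2: "(2 * L + 5) * ((2 + 8 / \<mu>) * D) \<le> R * D"
    proof -
      have "0 \<le> (2 + 8 / \<mu>) * D" using D_nn c8 by simp
      hence "(2 * L + 5) * ((2 + 8 / \<mu>) * D) \<le> (2 * L + 10) * ((2 + 8 / \<mu>) * D)"
        by (intro mult_right_mono) auto
      thus ?thesis unfolding Rdef by (simp add: mult.assoc)
    qed
    have "16 * (L + 5) / \<mu> \<ge> 0" using muL by simp
    moreover have "1 \<le> 4 * (L + 5)" using muL by (simp add: algebra_simps)
    ultimately have R1: "R \<ge> 1" unfolding R_def by (rule add_increasing2)
    have "Sf \<le> R * Sf" using R1 Sf_nn by (simp add: mult_le_cancel_right1)
    hence "sw_cost f T x \<le> R * Sf + R * D" using alg c1 c2 by linarith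
    thus ?thesis by (simp add: D_def algebra_simps)
  qed
  define S where "S = {sw_cost f T y | y. y 0 = 0 \<and> (\<forall>t\<in>{1..T}. y t \<in> X)}"
  have opt: "opt_cost X f T 0 = Inf S" by (simp add: opt_cost_def S_def)
  have Sne: "S \<noteq> {}" unfolding S_def using X(4) by auto
  have S_nn: "\<forall>c\<in>S. 0 \<le> c" unfolding S_def sw_cost_def using nonneg
    by (auto intro!: sum_nonneg add_nonneg_nonneg)
  have "16 * (L + 5) / \<mu> \<ge> 0" using muL by simp
  moreover have "1 \<le> 4 * (L + 5)" using muL by (simp add: algebra_simps)
  ultimately have "R \<ge> 1" unfolding R_def by (rule add_increasing2)
  hence Rpos: "R > 0" by linarith
  have inf_nn: "0 \<le> Inf S" using Sne S_nn by (intro cInf_greatest) auto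
  have inf_ge: "sw_cost f T x / R \<le> Inf S"
  proof (rule cInf_greatest[OF Sne])
    fix c assume "c \<in> S"
    then obtain y where "c = sw_cost f T y" "y 0 = 0" "\<forall>t\<in>{1..T}. y t \<in> X" unfolding S_def by blast
    thus "sw_cost f T x / R \<le> c" using optb Rpos by (simp add: divide_le_eq mult.commute)
  qed
  have "sw_cost f T x / Inf S \<le> R"
  proof (cases "Inf S = 0")
    case True then show ?thesis using Rpos by simp
  next
    case False
    hence "Inf S > 0" using inf_nn by simp
    moreover have "sw_cost f T x \<le> R * Inf S" using inf_ge Rpos by (simp add: divide_le_eq mult.commute)
    ultimately show ?thesis by (simp add: divide_le_eq mult.commute)
  qed
  thus ?thesis by (simp add: opt x_def K_def R_def)
qed


end
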